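(* Let $\mathbb{K}$ be an ordered field, $V$ a finite-dimensional vector space over $\mathbb{K}$, and $\varphi:V\to V$ a $\mathbb{K}$-linear automorphism all of whose eigenvalues (roots of the characteristic polynomial, with multiplicity) lie in $\mathbb{K}$ and are positive. Then $\varphi$ is order-preserving: there is a subset $P\subset V$ with $V=P\sqcup\{0\}\sqcup(-P)$, $P+P\subset P$, and $\varphi(P)\subset P$.
   Context: An ordering on a field $\mathbb{K}$ is a subset $Q$ with $\mathbb{K}=Q\sqcup\{0\}\sqcup(-Q)$ and $Q$ closed under addition and multiplication; elements of $Q$ are called positive. *)

theory Defs
  imports "Jordan_Normal_Form.Char_Poly"
begin

end

theory Submission
  imports Defs "Jordan_Normal_Form.Schur_Decomposition"
begin

typedef 'a cw = "UNIV :: 'a::linordered_field set" by auto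
setup_lifting type_definition_cw

instantiation cw :: (linordered_field) field
begin
lift_definition zero_cw :: "'a cw" is 0 .
lift_definition one_cw :: "'a cw" is 1 .
lift_definition plus_cw :: "'a cw \<Rightarrow> 'a cw \<Rightarrow> 'a cw" is "(+)" .
lift_definition minus_cw :: "'a cw \<Rightarrow> 'a cw \<Rightarrow> 'a cw" is "(-)" .
lift_definition uminus_cw :: "'a cw \<Rightarrow> 'a cw" is "uminus" .
lift_definition times_cw :: "'a cw \<Rightarrow> 'a cw \<Rightarrow> 'a cw" is "(*)" .
lift_definition divide_cw :: "'a cw \<Rightarrow> 'a cw \<Rightarrow> 'a cw" is "(/)" .
lift_definition inverse_cw :: "'a cw \<Rightarrow> 'a cw" is "inverse" .
instance
  by (standard; transfer; simp add: algebra_simps divide_inverse)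
end

instantiation cw :: (linordered_field) conjugatable_ordered_field
begin
lift_definition less_eq_cw :: "'a cw \<Rightarrow> 'a cw \<Rightarrow> bool" is "(\<le>)" .
lift_definition less_cw :: "'a cw \<Rightarrow> 'a cw \<Rightarrow> bool" is "(<)" .
definition conjugate_cw :: "'a cw \<Rightarrow> 'a cw" where "conjugate_cw x = x"
instance
  by (standard; (unfold conjugate_cw_def)?; transfer; auto)
end

interpretation abs_hom: comm_ring_hom "Abs_cw :: 'a::linordered_field \<Rightarrow> 'a cw"
  by (unfold_locales; simp add: zero_cw_def one_cw_def plus_cw_def times_cw_def Abs_cw_inverse)

interpretation rep_hom: comm_ring_hom "Rep_cw :: 'a::linordered_field cw \<Rightarrow> 'a"
  by (unfold_locales; transfer; simp)

definition lpos :: "nat \<Rightarrow> 'a::linordered_field vec \<Rightarrow> bool" where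
  "lpos n x = (\<exists>k<n. x $ k > 0 \<and> (\<forall>j. k < j \<and> j < n \<longrightarrow> x $ j = 0))"

lemma lpos_not_both:
  assumes "x \<in> carrier_vec n" "lpos n x" "lpos n (- x)" shows False
proof -
  obtain k1 where k1: "k1 < n" "x $ k1 > 0" "\<forall>j. k1 < j \<and> j < n \<longrightarrow> x $ j = 0"
    using assms(2) unfolding lpos_def by auto
  obtain k2 where k2: "k2 < n" "(- x) $ k2 > 0" "\<forall>j. k2 < j \<and> j < n \<longrightarrow> (- x) $ j = 0"
    using assms(3) unfolding lpos_def by auto
  have "k1 < k2 \<or> k2 < k1 \<or> k1 = k2" by auto
  then show False using k1 k2 assms(1) by auto
qed

lemma lpos_zero: "\<not> lpos n (0\<^sub>v n)"
  unfolding lpos_def by auto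

lemma lpos_total:
  assumes "x \<in> carrier_vec n" "x \<noteq> 0\<^sub>v n" shows "lpos n x \<or> lpos n (- x)"
proof -
  have "\<exists>k. k < n \<and> x $ k \<noteq> 0 \<and> (\<forall>j. k < j \<and> j < n \<longrightarrow> x $ j = 0)"
  proof -
    let ?S = "{k. k < n \<and> x $ k \<noteq> 0}"
    have "?S \<noteq> {}" using assms by (auto simp: vec_eq_iff)
    moreover have fin: "finite ?S" by auto
    ultimately have m: "Max ?S \<in> ?S" by (rule Max_in[rotated])
    have above: "\<forall>j. Max ?S < j \<and> j < n \<longrightarrow> x $ j = 0"
    proof (intro allI impI)
      fix j assume j: "Max ?S < j \<and> j < n"
      show "x $ j = 0"
      proof (rule ccontr)
        assume "x $ j \<noteq> 0"
        then have "j \<le> Max ?S" using Max_ge[OF fin, of j] j by auto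
        then show False using j by auto
      qed
    qed
    show ?thesis using m above by blast
  qed
  then obtain k where k: "k < n" "x $ k \<noteq> 0" "\<forall>j. k < j \<and> j < n \<longrightarrow> x $ j = 0" by blast
  show ?thesis
  proof (cases "x $ k > 0")
    case True
    have "lpos n x" unfolding lpos_def using k True by blast
    then show ?thesis ..
  next
    case False
    then have "(- x) $ k > 0" using k assms(1) by auto
    moreover have "\<forall>j. k < j \<and> j < n \<longrightarrow> (- x) $ j = 0" using k(3) assms(1) by simp
    ultimately have "lpos n (- x)" unfolding lpos_def using k(1) by blast
    then show ?thesis ..
  qed
qed

lemma lpos_add:
  assumes "x \<in> carrier_vec n" "y \<in> carrier_vec n" "lpos n x" "lpos n y" shows "lpos n (x + y)"
proof -
  obtain k1 where k1: "k1 < n" "x $ k1 > 0" "\<forall>j. k1 < j \<and> j < n \<longrightarrow> x $ j = 0"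
    using assms(3) unfolding lpos_def by auto
  obtain k2 where k2: "k2 < n" "y $ k2 > 0" "\<forall>j. k2 < j \<and> j < n \<longrightarrow> y $ j = 0"
    using assms(4) unfolding lpos_def by auto
  have "k1 < k2 \<or> k2 < k1 \<or> k1 = k2" by auto
  then show ?thesis
  proof (elim disjE)
    assume "k1 < k2" then show ?thesis unfolding lpos_def using k1 k2 assms(1,2)
      by (intro exI[of _ k2]) auto
  next
    assume "k2 < k1" then show ?thesis unfolding lpos_def using k1 k2 assms(1,2)
      by (intro exI[of _ k1]) auto
  next
    assume "k1 = k2" then show ?thesis unfolding lpos_def using k1 k2 assms(1,2)
      by (intro exI[of _ k1]) auto
  qed
qed

lemma lpos_mult:
  assumes B: "B \<in> carrier_mat n n" and ut: "upper_triangular B"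
    and d: "\<forall>i<n. B $$ (i,i) > 0"
    and x: "x \<in> carrier_vec n" and p: "lpos n x"
  shows "lpos n (B *\<^sub>v x)"
proof -
  obtain k where k: "k < n" "x $ k > 0" "\<forall>j. k < j \<and> j < n \<longrightarrow> x $ j = 0"
    using p unfolding lpos_def by auto
  have ent: "(B *\<^sub>v x) $ i = (\<Sum>j<n. B $$ (i,j) * x $ j)" if "i < n" for i
    using B x that by (auto simp: mult_mat_vec_def scalar_prod_def atLeast0LessThan)
  have lowz: "B $$ (i,j) = 0" if "j < i" "i < n" for i j
    using ut that B unfolding upper_triangular_def by auto
  have z: "(B *\<^sub>v x) $ i = 0" if "k < i" "i < n" for i
  proof -
    have "(\<Sum>j<n. B $$ (i,j) * x $ j) = 0"
    proof (rule sum.neutral, intro ballI)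
      fix j assume "j \<in> {..<n}"
      then show "B $$ (i,j) * x $ j = 0"
        using lowz[of j i] k(3) that by (cases "j < i") auto
    qed
    then show ?thesis using ent that by simp
  qed
  have "(\<Sum>j<n. B $$ (k,j) * x $ j) = B $$ (k,k) * x $ k + (\<Sum>j\<in>{..<n}-{k}. B $$ (k,j) * x $ j)"
    by (rule sum.remove) (use k in auto)
  also have "(\<Sum>j\<in>{..<n}-{k}. B $$ (k,j) * x $ j) = 0"
  proof (rule sum.neutral, intro ballI)
    fix j assume "j \<in> {..<n}-{k}"
    then show "B $$ (k,j) * x $ j = 0"
      using lowz[of j k] k by (cases "j < k") auto
  qed
  finally have "(B *\<^sub>v x) $ k = B $$ (k,k) * x $ k" using ent k by simp
  then have "(B *\<^sub>v x) $ k > 0" using d k by simp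
  then show ?thesis unfolding lpos_def using z k by blast
qed


lemma mat_vec_uminus:
  fixes P :: "'a::linordered_field mat"
  assumes "P \<in> carrier_mat n n" "x \<in> carrier_vec n"
  shows "P *\<^sub>v (- x) = - (P *\<^sub>v x)"
proof -
  have neg: "- v = (-1) \<cdot>\<^sub>v v" for v :: "'a vec" by (intro eq_vecI) auto
  show ?thesis unfolding neg[of x] neg[of "P *\<^sub>v x"] by (rule mult_mat_vec[OF assms])
qed

lemma mat_vec_zero:
  fixes P :: "'a::linordered_field mat"
  assumes "P \<in> carrier_mat n n"
  shows "P *\<^sub>v (0\<^sub>v n) = 0\<^sub>v n"
  using assms by (intro eq_vecI) (auto simp: scalar_prod_def)

lemma triangularize:
  fixes A :: "'a :: linordered_field mat"
  assumes A: "A \<in> carrier_mat n n"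
    and cp: "char_poly A = (\<Prod>a\<leftarrow>as. [:- a, 1:])"
  shows "\<exists>B P Q. B \<in> carrier_mat n n \<and> P \<in> carrier_mat n n \<and> Q \<in> carrier_mat n n
     \<and> P * Q = 1\<^sub>m n \<and> Q * P = 1\<^sub>m n \<and> A = P * B * Q \<and> upper_triangular B
     \<and> (\<forall>i<n. B $$ (i,i) \<in> set as)"
proof -
  interpret mp: map_poly_comm_ring_hom "Abs_cw :: 'a \<Rightarrow> 'a cw" ..
  define A' where "A' = map_mat Abs_cw A"
  have A': "A' \<in> carrier_mat n n" using A by (simp add: A'_def)
  have lin: "map_poly Abs_cw [:- a, 1:] = [:- Abs_cw a, 1:]" for a :: 'a
    by (simp add: abs_hom.hom_uminus)
  have cp': "char_poly A' = (\<Prod>a\<leftarrow>map Abs_cw as. [:- a, 1:])"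
    unfolding A'_def abs_hom.char_poly_hom[OF A] cp mp.hom_prod_list
    by (simp add: o_def lin)
  obtain B' P' Q' where sd: "schur_decomposition A' (map Abs_cw as) = (B',P',Q')"
    by (cases "schur_decomposition A' (map Abs_cw as)") auto
  from schur_decomposition[OF A' cp' sd]
  have sim: "similar_mat_wit A' B' P' Q'" and ut: "upper_triangular B'"
    and dg: "diag_mat B' = map Abs_cw as" by auto
  from sim A' have cB': "B' \<in> carrier_mat n n" and cP': "P' \<in> carrier_mat n n"
    and cQ': "Q' \<in> carrier_mat n n" and PQ': "P' * Q' = 1\<^sub>m n" and QP': "Q' * P' = 1\<^sub>m n"
    and eq': "A' = P' * B' * Q'"
    unfolding similar_mat_wit_def Let_def by auto
  define B where "B = map_mat Rep_cw B'"
  define P where "P = map_mat Rep_cw P'"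
  define Q where "Q = map_mat Rep_cw Q'"
  have AA: "A = map_mat Rep_cw A'" unfolding A'_def by (rule eq_matI) (auto simp: Abs_cw_inverse)
  show ?thesis
  proof (intro exI conjI)
    show "B \<in> carrier_mat n n" "P \<in> carrier_mat n n" "Q \<in> carrier_mat n n"
      using cB' cP' cQ' by (auto simp: B_def P_def Q_def)
    show "P * Q = 1\<^sub>m n" unfolding P_def Q_def
      using rep_hom.mat_hom_mult[OF cP' cQ', symmetric] PQ' rep_hom.mat_hom_one by simp
    show "Q * P = 1\<^sub>m n" unfolding P_def Q_def
      using rep_hom.mat_hom_mult[OF cQ' cP', symmetric] QP' rep_hom.mat_hom_one by simp
    have "P' * B' \<in> carrier_mat n n" using cP' cB' by simp
    show "A = P * B * Q" unfolding AA eq' P_def B_def Q_def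
      using rep_hom.mat_hom_mult[OF cP' cB'] rep_hom.mat_hom_mult[OF \<open>P' * B' \<in> carrier_mat n n\<close> cQ']
      by simp
    show "upper_triangular B" using ut cB' unfolding upper_triangular_def B_def
      by (auto simp: zero_cw.rep_eq)
    show "\<forall>i<n. B $$ (i,i) \<in> set as"
    proof (intro allI impI)
      fix i assume i: "i < n"
      have "diag_mat B' ! i = B' $$ (i,i)" using i cB' by (simp add: diag_mat_def)
      moreover have "length as = n" using arg_cong[OF dg, of length] cB' by (simp add: diag_mat_def)
      ultimately have "B' $$ (i,i) = Abs_cw (as ! i)" using dg i by simp
      then have "B $$ (i,i) = as ! i" using i cB' by (simp add: B_def Abs_cw_inverse)
      then show "B $$ (i,i) \<in> set as" using \<open>length as = n\<close> i by simp
    qed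
  qed
qed


theorem mainTheorem6:
  fixes A :: "'a :: linordered_field mat" and n :: nat
  assumes "A \<in> carrier_mat n n"
    and "invertible_mat A"
    and "\<exists>as. char_poly A = (\<Prod>a\<leftarrow>as. [:- a, 1:]) \<and> (\<forall>a\<in>set as. a > 0)"
  shows "\<exists>P. carrier_vec n = P \<union> {0\<^sub>v n} \<union> (\<lambda>v. - v) ` P
            \<and> 0\<^sub>v n \<notin> P \<and> P \<inter> (\<lambda>v. - v) ` P = {}
            \<and> (\<forall>u\<in>P. \<forall>v\<in>P. u + v \<in> P)
            \<and> (\<forall>v\<in>P. A *\<^sub>v v \<in> P)"
proof -
  from assms(3) obtain as where cp: "char_poly A = (\<Prod>a\<leftarrow>as. [:- a, 1:])"
    and pos: "\<forall>a\<in>set as. a > 0" by blast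
  from triangularize[OF assms(1) cp] obtain B P Q where
    cB: "B \<in> carrier_mat n n" and cP: "P \<in> carrier_mat n n" and cQ: "Q \<in> carrier_mat n n"
    and PQ: "P * Q = 1\<^sub>m n" and QP: "Q * P = 1\<^sub>m n" and AeqQ: "A = P * B * Q"
    and ut: "upper_triangular B" and dg: "\<forall>i<n. B $$ (i,i) \<in> set as" by blast
  have dpos: "\<forall>i<n. B $$ (i,i) > 0" using dg pos by auto
  define C where "C = {x :: 'a vec. x \<in> carrier_vec n \<and> lpos n x}"
  define PP where "PP = (\<lambda>x. P *\<^sub>v x) ` C"
  have QPx: "Q *\<^sub>v (P *\<^sub>v x) = x" if x: "x \<in> carrier_vec n" for x
  proof -
    have "(Q * P) *\<^sub>v x = Q *\<^sub>v (P *\<^sub>v x)" by (rule assoc_mult_mat_vec[OF cQ cP x])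
    then show ?thesis using QP x by simp
  qed
  have PQx: "P *\<^sub>v (Q *\<^sub>v x) = x" if x: "x \<in> carrier_vec n" for x
  proof -
    have "(P * Q) *\<^sub>v x = P *\<^sub>v (Q *\<^sub>v x)" by (rule assoc_mult_mat_vec[OF cP cQ x])
    then show ?thesis using PQ x by simp
  qed
  have APx: "A *\<^sub>v (P *\<^sub>v x) = P *\<^sub>v (B *\<^sub>v x)" if x: "x \<in> carrier_vec n" for x
  proof -
    have PB: "P * B \<in> carrier_mat n n" using cP cB by simp
    have Px: "P *\<^sub>v x \<in> carrier_vec n" using cP x by simp
    have "A *\<^sub>v (P *\<^sub>v x) = (P * B) *\<^sub>v (Q *\<^sub>v (P *\<^sub>v x))"
      unfolding AeqQ by (rule assoc_mult_mat_vec[OF PB cQ Px])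
    also have "\<dots> = (P * B) *\<^sub>v x" using QPx[OF x] by simp
    also have "\<dots> = P *\<^sub>v (B *\<^sub>v x)" by (rule assoc_mult_mat_vec[OF cP cB x])
    finally show ?thesis .
  qed
  have PPc: "PP \<subseteq> carrier_vec n" using cP unfolding PP_def C_def by auto
  show ?thesis
  proof (intro exI[of _ PP] conjI)
    show "carrier_vec n = PP \<union> {0\<^sub>v n} \<union> (\<lambda>v. - v) ` PP"
    proof
      show "carrier_vec n \<subseteq> PP \<union> {0\<^sub>v n} \<union> (\<lambda>v. - v) ` PP"
      proof
        fix v :: "'a vec" assume v: "v \<in> carrier_vec n"
        define x where "x = Q *\<^sub>v v"
        have x: "x \<in> carrier_vec n" using cQ v by (simp add: x_def)
        have vx: "v = P *\<^sub>v x" using PQx[OF v] x_def by simp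
        show "v \<in> PP \<union> {0\<^sub>v n} \<union> (\<lambda>v. - v) ` PP"
        proof (cases "x = 0\<^sub>v n")
          case True then have "v = 0\<^sub>v n" using vx mat_vec_zero[OF cP] by simp
          then show ?thesis by simp
        next
          case False
          from lpos_total[OF x False] show ?thesis
          proof
            assume "lpos n x" then have "v \<in> PP" using vx x unfolding PP_def C_def by auto
            then show ?thesis by simp
          next
            assume "lpos n (- x)"
            then have "P *\<^sub>v (- x) \<in> PP" using x unfolding PP_def C_def by auto
            moreover have "v = - (P *\<^sub>v (- x))" using vx mat_vec_uminus[OF cP x] by simp
            ultimately show ?thesis by blast
          qed
        qed
      qed
      show "PP \<union> {0\<^sub>v n} \<union> (\<lambda>v. - v) ` PP \<subseteq> carrier_vec n" using PPc by auto
    qed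
    show "0\<^sub>v n \<notin> PP"
    proof
      assume "0\<^sub>v n \<in> PP"
      then obtain x where x: "x \<in> carrier_vec n" "lpos n x" and e: "0\<^sub>v n = P *\<^sub>v x"
        unfolding PP_def C_def by auto
      have "x = Q *\<^sub>v (0\<^sub>v n)" using QPx[OF x(1)] e by simp
      also have "\<dots> = 0\<^sub>v n" by (rule mat_vec_zero[OF cQ])
      finally have "x = 0\<^sub>v n" .
      then show False using x(2) lpos_zero[of n] by metis
    qed
    show "PP \<inter> (\<lambda>v. - v) ` PP = {}"
    proof (rule ccontr)
      assume "PP \<inter> (\<lambda>v. - v) ` PP \<noteq> {}"
      then obtain x y where x: "x \<in> carrier_vec n" "lpos n x" and y: "y \<in> carrier_vec n" "lpos n y"
        and e: "P *\<^sub>v x = - (P *\<^sub>v y)"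
        unfolding PP_def C_def by auto
      have "P *\<^sub>v x = P *\<^sub>v (- y)" using e mat_vec_uminus[OF cP y(1)] by simp
      then have "Q *\<^sub>v (P *\<^sub>v x) = Q *\<^sub>v (P *\<^sub>v (- y))" by simp
      then have "x = - y" using QPx[OF x(1)] QPx[of "- y"] y(1) by simp
      then show False using lpos_not_both[OF y] x(2) by simp
    qed
    show "\<forall>u\<in>PP. \<forall>v\<in>PP. u + v \<in> PP"
    proof (intro ballI)
      fix u v assume "u \<in> PP" "v \<in> PP"
      then obtain x y where x: "x \<in> carrier_vec n" "lpos n x" and y: "y \<in> carrier_vec n" "lpos n y"
        and e: "u = P *\<^sub>v x" "v = P *\<^sub>v y"
        unfolding PP_def C_def by auto
      have "u + v = P *\<^sub>v (x + y)" using e mult_add_distrib_mat_vec[OF cP x(1) y(1)] by simp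
      moreover have "x + y \<in> C" using lpos_add[OF x(1) y(1) x(2) y(2)] x y unfolding C_def by simp
      ultimately show "u + v \<in> PP" unfolding PP_def by blast
    qed
    show "\<forall>v\<in>PP. A *\<^sub>v v \<in> PP"
    proof
      fix v assume "v \<in> PP"
      then obtain x where x: "x \<in> carrier_vec n" "lpos n x" and e: "v = P *\<^sub>v x"
        unfolding PP_def C_def by auto
      have "A *\<^sub>v v = P *\<^sub>v (B *\<^sub>v x)" using APx[OF x(1)] e by simp
      moreover have "B *\<^sub>v x \<in> C" using lpos_mult[OF cB ut dpos x] cB x unfolding C_def by simp
      ultimately show "A *\<^sub>v v \<in> PP" unfolding PP_def by blast
    qed
  qed
qed

end
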